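(* Let $N\in\mathbb N$. The ring $R_J(N)$ contains: (1) the Laurent polynomials $\mathbb C[\zeta^{1/N},\zeta^{-1/N},q^{1/N},q^{-1/N}]$; (2) the Fourier expansions of weakly holomorphic Jacobi forms of level $N$ (of any weight $k$ and index $m\ge0$); (3) every infinite product of the form $\prod_{j=1}^\infty\bigl(1+q^{j/N}h_j(q^{1/N},\zeta^{1/N})\bigr)$, where each $h_j\in\mathbb C[q,\zeta,\zeta^{-1}]$ is either zero or a polynomial, and there is $D>0$ with $\deg_\zeta h_j\le D$ for all $j$, where $\deg_\zeta h_j=\max\{|r|:\ \zeta^r \text{ occurs in } h_j \text{ with nonzero coefficient}\}$.
   Context: $R(N)=\mathbb C[\zeta^{1/N},\zeta^{-1/N}]((q^{1/N}))$ is the ring of formal series $f=\sum_{n,r\in\frac1N\mathbb Z}c(n,r)q^n\zeta^r$ such that for each $n$ only finitely many $r$ have $c(n,r)\ne0$ and $n$ is bounded below on $\operatorname{supp}(f)=\{(n,r): c(n,r)\neq0\}$. $R_J(N)$ is the set of $f\in R(N)$ for which there exist $a>0$, $b,c\in\mathbb R$ with $\operatorname{supp}(f)\subseteq\{(n,r): n\ge ar^2+br+c\}$. Here $q=e^{2\pi i\tau}$, $\zeta=e^{2\pi i z}$ for $(\tau,z)\in\mathcal H_1\times\mathbb C$. Let $P_{2,1}(\mathbb Z)$ be the subgroup of $\operatorname{Sp}_2(\mathbb Z)$ of matrices whose entries in positions (1,2), (3,2), (4,1), (4,2), (4,3) vanish, and $\Gamma_2(N)=\{\sigma\in\operatorname{Sp}_2(\mathbb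 Z):\sigma\equiv I_4 \bmod N\}$. For $m\in\mathbb Q_{\ge0}$ and $2k\in\mathbb Z$, a weakly holomorphic Jacobi form of weight $k$, index $m$ and level $N$ is a holomorphic $\phi:\mathcal H_1\times\mathbb C\to\mathbb C$ such that $\tilde\phi\begin{pmatrix}\tau&z\\ z&\omega\end{pmatrix}=\phi(\tau,z)e^{2\pi i m\omega}$ satisfies $\det(C\Omega+D)^{-k}\tilde\phi(\sigma\langle\Omega\rangle)=\chi(\sigma)\tilde\phi(\Omega)$ for all $\sigma=\begin{pmatrix}A&B\\C&D\end{pmatrix}\in P_{2,1}(\mathbb Z)\cap\Gamma_2(N)$ (for a fixed multiplier $\chi$ of finite order), whose Fourier expansion $\sum c(n,r)q^n\zeta^r$ has $n,r\in\frac1N\mathbb Z$ with $n$ bounded below on the support (and similarly at each cusp). *)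

theory Defs
  imports "HOL-Analysis.Analysis"
begin

text \<open>A formal series sum c(n,r) q^n zeta^r with n, r in (1/N)Z is encoded by its
  coefficient function f :: int => int => complex, where f n r is the coefficient of
  q^(n/N) zeta^(r/N).\<close>

type_synonym fser = "int \<Rightarrow> int \<Rightarrow> complex"

definition fsupp :: "fser \<Rightarrow> (int \<times> int) set" where
  "fsupp f = {(n, r). f n r \<noteq> 0}"

definition inR :: "nat \<Rightarrow> fser \<Rightarrow> bool" where
  "inR N f \<longleftrightarrow> (\<forall>n. finite {r. f n r \<noteq> 0}) \<and> bdd_below {n. \<exists>r. f n r \<noteq> 0}"

definition inRJ :: "nat \<Rightarrow> fser \<Rightarrow> bool" where
  "inRJ N f \<longleftrightarrow> inR N f \<and>
     (\<exists>a b c :: real. a > 0 \<and>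
        (\<forall>(n, r) \<in> fsupp f. real_of_int n / real N \<ge>
            a * (real_of_int r / real N)^2 + b * (real_of_int r / real N) + c))"

definition laurent_poly :: "fser \<Rightarrow> bool" where
  "laurent_poly f \<longleftrightarrow> finite (fsupp f)"

definition fs_one :: fser where
  "fs_one n r = (if n = 0 \<and> r = 0 then 1 else 0)"

definition fs_mult :: "fser \<Rightarrow> fser \<Rightarrow> fser" where
  "fs_mult f g n r = (\<Sum>\<^sub>\<infinity>(n1, r1) \<in> UNIV. f n1 r1 * g (n - n1) (r - r1))"

text \<open>h j a r is the coefficient of q^a zeta^r in h_j in C[q, zeta, zeta^(-1)].
  The factor 1 + q^(j/N) h_j(q^(1/N), zeta^(1/N)) in the encoding above:\<close>
definition prod_factor :: "(nat \<Rightarrow> int \<Rightarrow> int \<Rightarrow> complex) \<Rightarrow> nat \<Rightarrow> fser" where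
  "prod_factor h j n r = fs_one n r + h j (n - int j) r"

primrec partial_prod :: "(nat \<Rightarrow> int \<Rightarrow> int \<Rightarrow> complex) \<Rightarrow> nat \<Rightarrow> fser" where
  "partial_prod h 0 = fs_one"
| "partial_prod h (Suc J) = fs_mult (partial_prod h J) (prod_factor h (Suc J))"

definition is_inf_prod :: "(nat \<Rightarrow> int \<Rightarrow> int \<Rightarrow> complex) \<Rightarrow> fser \<Rightarrow> bool" where
  "is_inf_prod h f \<longleftrightarrow>
     (\<forall>n. \<forall>\<^sub>F J in sequentially. \<forall>r. partial_prod h J n r = f n r)"

text \<open>4x4 integer matrices are functions nat => nat => int, entries indexed by 1..4.\<close>
type_synonym imat = "nat \<Rightarrow> nat \<Rightarrow> int"
type_synonym cmat2 = "nat \<Rightarrow> nat \<Rightarrow> complex"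

definition Jsym :: imat where
  "Jsym i j = (if (i, j) = (1, 3) \<or> (i, j) = (2, 4) then 1
               else if (i, j) = (3, 1) \<or> (i, j) = (4, 2) then -1 else 0)"

definition Sp2Z :: "imat \<Rightarrow> bool" where
  "Sp2Z M \<longleftrightarrow> (\<forall>i\<in>{1..4}. \<forall>j\<in>{1..4}.
      (\<Sum>k\<in>{1..4}. \<Sum>l\<in>{1..4}. M k i * Jsym k l * M l j) = Jsym i j)"

definition P21Z :: "imat \<Rightarrow> bool" where
  "P21Z M \<longleftrightarrow> Sp2Z M \<and> M 1 2 = 0 \<and> M 3 2 = 0 \<and> M 4 1 = 0 \<and> M 4 2 = 0 \<and> M 4 3 = 0"

definition Gamma2 :: "nat \<Rightarrow> imat \<Rightarrow> bool" where
  "Gamma2 N M \<longleftrightarrow> Sp2Z M \<and>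
     (\<forall>i\<in>{1..4}. \<forall>j\<in>{1..4}. int N dvd (M i j - (if i = j then 1 else 0)))"

definition blk :: "imat \<Rightarrow> nat \<Rightarrow> nat \<Rightarrow> cmat2" where
  "blk M r0 c0 = (\<lambda>i j. of_int (M (r0 + i) (c0 + j)))"

definition Om :: "complex \<Rightarrow> complex \<Rightarrow> complex \<Rightarrow> cmat2" where
  "Om \<tau> z \<omega> = (\<lambda>i j. if i = 1 \<and> j = 1 then \<tau> else if i = 2 \<and> j = 2 then \<omega> else z)"

definition madd2 :: "cmat2 \<Rightarrow> cmat2 \<Rightarrow> cmat2" where
  "madd2 X Y = (\<lambda>i j. X i j + Y i j)"

definition mmul2 :: "cmat2 \<Rightarrow> cmat2 \<Rightarrow> cmat2" where
  "mmul2 X Y = (\<lambda>i j. \<Sum>k\<in>{1,2}. X i k * Y k j)"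

definition det2 :: "cmat2 \<Rightarrow> complex" where
  "det2 X = X 1 1 * X 2 2 - X 1 2 * X 2 1"

definition minv2 :: "cmat2 \<Rightarrow> cmat2" where
  "minv2 X = (\<lambda>i j. (if i = 1 \<and> j = 1 then X 2 2 else if i = 2 \<and> j = 2 then X 1 1
                      else - X i j) / det2 X)"

definition sp_act :: "imat \<Rightarrow> cmat2 \<Rightarrow> cmat2" where
  "sp_act M W = mmul2 (madd2 (mmul2 (blk M 0 0) W) (blk M 0 2))
                      (minv2 (madd2 (mmul2 (blk M 2 0) W) (blk M 2 2)))"

definition j_fac :: "imat \<Rightarrow> cmat2 \<Rightarrow> complex" where
  "j_fac M W = det2 (madd2 (mmul2 (blk M 2 0) W) (blk M 2 2))"

text \<open>Siegel upper half space of degree 2 (symmetric Omega with Im Omega positive definite).\<close>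
definition H2 :: "complex \<Rightarrow> complex \<Rightarrow> complex \<Rightarrow> bool" where
  "H2 \<tau> z \<omega> \<longleftrightarrow> Im \<tau> > 0 \<and> Im \<tau> * Im \<omega> - (Im z)^2 > 0"

definition ephi :: "rat \<Rightarrow> (complex \<Rightarrow> complex \<Rightarrow> complex) \<Rightarrow> cmat2 \<Rightarrow> complex" where
  "ephi m \<phi> W = \<phi> (W 1 1) (W 1 2) * exp (2 * pi * \<i> * of_rat m * W 2 2)"

text \<open>det(C Omega + D)^(-k) tilde-phi(sigma<Omega>) (principal branch of the power).\<close>
definition slashed :: "real \<Rightarrow> rat \<Rightarrow> (complex \<Rightarrow> complex \<Rightarrow> complex) \<Rightarrow> imat \<Rightarrow> cmat2 \<Rightarrow> complex" where
  "slashed k m \<phi> M W = j_fac M W powr (- of_real k) * ephi m \<phi> (sp_act M W)"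

definition has_fexp :: "nat \<Rightarrow> (complex \<Rightarrow> complex \<Rightarrow> complex) \<Rightarrow> fser \<Rightarrow> bool" where
  "has_fexp N \<psi> c \<longleftrightarrow> (\<forall>\<tau> z. Im \<tau> > 0 \<longrightarrow>
     ((\<lambda>(n, r). c n r * exp (2 * pi * \<i> * (of_int n / of_nat N) * \<tau>)
                      * exp (2 * pi * \<i> * (of_int r / of_nat N) * z)) has_sum \<psi> \<tau> z) UNIV)"

definition weakly_hol_jacobi ::
  "nat \<Rightarrow> real \<Rightarrow> rat \<Rightarrow> (imat \<Rightarrow> complex) \<Rightarrow> (complex \<Rightarrow> complex \<Rightarrow> complex) \<Rightarrow> bool" where
  "weakly_hol_jacobi N k m chi \<phi> \<longleftrightarrow>
     (\<exists>l::int. 2 * k = of_int l) \<and> m \<ge> 0 \<and>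
     (\<exists>d::nat. d > 0 \<and> (\<forall>M. P21Z M \<and> Gamma2 N M \<longrightarrow> chi M ^ d = 1)) \<and>
     continuous_on ({\<tau>. Im \<tau> > 0} \<times> UNIV) (\<lambda>(\<tau>, z). \<phi> \<tau> z) \<and>
     (\<forall>z. (\<lambda>\<tau>. \<phi> \<tau> z) holomorphic_on {\<tau>. Im \<tau> > 0}) \<and>
     (\<forall>\<tau>. Im \<tau> > 0 \<longrightarrow> (\<lambda>z. \<phi> \<tau> z) holomorphic_on UNIV) \<and>
     (\<forall>M \<tau> z \<omega>. P21Z M \<and> Gamma2 N M \<and> H2 \<tau> z \<omega> \<longrightarrow>
        slashed k m \<phi> M (Om \<tau> z \<omega>) = chi M * ephi m \<phi> (Om \<tau> z \<omega>)) \<and>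
     (\<exists>c. has_fexp N \<phi> c \<and> bdd_below {n. \<exists>r. c n r \<noteq> 0}) \<and>
     (\<forall>M. P21Z M \<longrightarrow>
        (\<exists>\<psi> c. (\<forall>\<tau> z \<omega>. H2 \<tau> z \<omega> \<longrightarrow>
                   slashed k m \<phi> M (Om \<tau> z \<omega>) = \<psi> \<tau> z * exp (2 * pi * \<i> * of_rat m * \<omega>)) \<and>
                has_fexp N \<psi> c \<and> bdd_below {n. \<exists>r. c n r \<noteq> 0}))"

end

theory Submission
  imports Defs
begin


lemma exp_int_has_integral:
  fixes N :: nat and m :: int
  assumes N: "N > 0"
  shows "((\<lambda>x::real. exp (2 * pi * \<i> * (of_int m / of_nat N) * of_real x))
           has_integral (if m = 0 then of_nat N else 0)) {0..real N}"
proof (cases "m = 0")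
  case True
  then show ?thesis using has_integral_const_real[of "1::complex" 0 "real N"] by (simp add: scaleR_conv_of_real)
next
  case False
  define A :: complex where "A = 2 * pi * \<i> * (of_int m / of_nat N)"
  have A0: "A \<noteq> 0" using False N by (simp add: A_def)
  have eq: "\<And>x::real. exp (2 * pi * \<i> * (of_int m / of_nat N) * of_real x) = exp (x *\<^sub>R A)"
    by (simp add: A_def scaleR_conv_of_real mult_ac)
  have d: "\<And>x. ((\<lambda>t. exp (t *\<^sub>R A) / A) has_vector_derivative exp (x *\<^sub>R A)) (at x within {0..real N})"
  proof -
    fix x
    have "((\<lambda>t. exp (t *\<^sub>R A) * (1/A)) has_vector_derivative exp (x *\<^sub>R A) * A * (1/A)) (at x within {0..real N})"
      by (intro has_vector_derivative_mult_left exp_scaleR_has_vector_derivative_right)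
    then show "((\<lambda>t. exp (t *\<^sub>R A) / A) has_vector_derivative exp (x *\<^sub>R A)) (at x within {0..real N})"
      using A0 by simp
  qed
  have "((\<lambda>x. exp (x *\<^sub>R A)) has_integral (exp (real N *\<^sub>R A) / A - exp (0 *\<^sub>R A) / A)) {0..real N}"
    by (rule fundamental_theorem_of_calculus) (use d in auto)
  moreover have "exp (real N *\<^sub>R A) = 1"
  proof -
    have "real N *\<^sub>R A = 2 * of_int m * pi * \<i>" using N by (simp add: A_def scaleR_conv_of_real)
    then show ?thesis using exp_integer_2pi[of "of_int m"] by simp
  qed
  ultimately have "((\<lambda>x. exp (x *\<^sub>R A)) has_integral 0) {0..real N}" by simp
  then show ?thesis using False by (subst ext[OF eq]) simp
qed


definition ex :: "nat \<Rightarrow> int \<Rightarrow> complex \<Rightarrow> complex" where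
  "ex N k w = exp (2 * pi * \<i> * (of_int k / of_nat N) * w)"

lemma ex_has_integral:
  "N > 0 \<Longrightarrow> ((\<lambda>x::real. ex N m (of_real x)) has_integral (if m = 0 then of_nat N else 0)) {0..real N}"
  unfolding ex_def by (rule exp_int_has_integral)

lemma norm_ex_real: "norm (ex N k (of_real x)) = 1"
  by (simp add: ex_def norm_exp_eq_Re)

lemma ex_mult: "ex N k w * ex N l w = ex N (k + l) w"
  by (simp add: ex_def exp_add[symmetric] add_divide_distrib distrib_left distrib_right mult_ac)

lemma ex_zero[simp]: "ex N k 0 = 1"
  by (simp add: ex_def)

lemma fourier_unique_1d:
  fixes a :: "int \<Rightarrow> complex" and N :: nat
  assumes N: "N > 0"
    and S: "\<And>x::real. ((\<lambda>k. a k * ex N k (of_real x)) has_sum 0) UNIV"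
  shows "a j = 0"
proof -
  have "(a has_sum 0) UNIV" using S[of 0] by simp
  hence "a summable_on UNIV" by (auto simp: summable_on_def)
  hence na: "(\<lambda>k. norm (a k)) summable_on UNIV"
    using summable_on_iff_abs_summable_on_complex by blast
  have bound: "norm (a j) \<le> e" if e: "e > 0" for e
  proof -
    obtain F where F: "finite F" "dist (sum (\<lambda>k. norm (a k)) F) (infsum (\<lambda>k. norm (a k)) UNIV) \<le> e"
      using infsum_finite_approximation[OF na e] by blast
    define G where "G = insert j F"
    have G: "finite G" "j \<in> G" "F \<subseteq> G" using F by (auto simp: G_def)
    have "sum (\<lambda>k. norm (a k)) F \<le> sum (\<lambda>k. norm (a k)) G"
      by (rule sum_mono2) (use G in auto)
    have T: "infsum (\<lambda>k. norm (a k)) (UNIV - G) \<le> e"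
    proof -
      have "infsum (\<lambda>k. norm (a k)) (UNIV - G) = infsum (\<lambda>k. norm (a k)) UNIV - sum (\<lambda>k. norm (a k)) G"
        by (subst infsum_Diff) (use na G in auto)
      also have "\<dots> \<le> e" using F(2) \<open>sum (\<lambda>k. norm (a k)) F \<le> sum (\<lambda>k. norm (a k)) G\<close>
        by (simp add: dist_real_def abs_le_iff)
      finally show ?thesis .
    qed
    have pt: "norm (\<Sum>k\<in>G. a k * ex N k (of_real x)) \<le> e" for x
    proof -
      have sm: "(\<lambda>k. a k * ex N k (of_real x)) summable_on UNIV"
        using S[of x] by (auto simp: summable_on_def)
      have "infsum (\<lambda>k. a k * ex N k (of_real x)) (UNIV - G) = 0 - (\<Sum>k\<in>G. a k * ex N k (of_real x))"
        by (subst infsum_Diff) (use sm G S[of x] in \<open>auto simp: infsumI\<close>)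
      hence "norm (\<Sum>k\<in>G. a k * ex N k (of_real x)) = norm (infsum (\<lambda>k. a k * ex N k (of_real x)) (UNIV - G))"
        by (simp add: norm_minus_commute)
      also have "\<dots> \<le> infsum (\<lambda>k. norm (a k * ex N k (of_real x))) (UNIV - G)"
      proof (rule norm_infsum_bound)
        have "(\<lambda>k. norm (a k)) summable_on (UNIV - G)"
          by (rule summable_on_subset_banach[OF na]) auto
        then show "(\<lambda>k. norm (a k * ex N k (of_real x))) summable_on (UNIV - G)"
          by (simp add: norm_mult norm_ex_real)
      qed
      also have "\<dots> = infsum (\<lambda>k. norm (a k)) (UNIV - G)"
        by (simp add: norm_mult norm_ex_real)
      finally show ?thesis using T by simp
    qed
    have int: "((\<lambda>x::real. (\<Sum>k\<in>G. a k * ex N (k - j) (of_real x))) has_integral (\<Sum>k\<in>G. a k * (if k - j = 0 then of_nat N else 0))) {0..real N}"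
      by (intro has_integral_sum G has_integral_mult_right ex_has_integral[OF N])
    have "(\<Sum>k\<in>G. a k * (if k - j = 0 then of_nat N else 0)) = a j * of_nat N"
      using G by (simp add: if_distrib sum.delta cong: if_cong)
    moreover have "(\<Sum>k\<in>G. a k * ex N (k - j) (of_real x)) = (\<Sum>k\<in>G. a k * ex N k (of_real x)) * ex N (-j) (of_real x)" for x
      by (simp add: sum_distrib_right mult.assoc ex_mult)
    ultimately have int2: "((\<lambda>x::real. (\<Sum>k\<in>G. a k * ex N k (of_real x)) * ex N (-j) (of_real x)) has_integral (a j * of_nat N)) (cbox 0 (real N))"
      using int by simp
    have "norm (a j * of_nat N) \<le> e * Henstock_Kurzweil_Integration.content (cbox 0 (real N))"
      by (rule has_integral_bound[OF _ int2]) (use e pt in \<open>auto simp: norm_mult norm_ex_real\<close>)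
    then show ?thesis using N by (simp add: norm_mult)
  qed
  show ?thesis
  proof (rule ccontr)
    assume "a j \<noteq> 0"
    then have "norm (a j) > 0" by simp
    from bound[of "norm (a j) / 2"] this show False by simp
  qed
qed


lemma ex_add_arg: "ex N k (w1 + w2) = ex N k w1 * ex N k w2"
  by (simp add: ex_def exp_add[symmetric] distrib_left)

lemma ex_nonzero[simp]: "ex N k w \<noteq> 0"
  by (simp add: ex_def)

lemma fourier_unique_2d:
  fixes e :: "int \<Rightarrow> int \<Rightarrow> complex" and N :: nat
  assumes N: "N > 0"
    and S: "\<And>\<tau> z. Im \<tau> > 0 \<Longrightarrow> ((\<lambda>(n, r). e n r * ex N n \<tau> * ex N r z) has_sum 0) UNIV"
  shows "e n0 r0 = 0"
proof -
  define B where "B n x = infsum (\<lambda>r. e n r * ex N r x) UNIV" for n x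
  have sumr: "(\<lambda>r. e n r * ex N r z) summable_on UNIV" for n z
  proof -
    have "(\<lambda>(n, r). e n r * ex N n \<i> * ex N r z) summable_on (Sigma UNIV (\<lambda>_. UNIV))"
      using S[of \<i> z] by (auto simp: summable_on_def)
    from summable_on_SigmaD1[OF this, of n]
    have "(\<lambda>r. ex N n \<i> * (e n r * ex N r z)) summable_on UNIV" by (simp add: mult_ac)
    then show ?thesis using summable_on_cmult_right'[of "ex N n \<i>"] 
      by (metis ex_nonzero summable_on_cmult_right summable_on_cong nonzero_mult_div_cancel_left
          mult.assoc mult_1 nonzero_divide_eq_eq)
  qed
  have B0: "B n (of_real x) = 0" for n x
  proof -
    have "((\<lambda>n. (B n (of_real x) * ex N n \<i>) * ex N n (of_real y)) has_sum 0) UNIV" for y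
    proof -
      define \<tau> where "\<tau> = of_real y + \<i>"
      have "Im \<tau> > 0" by (simp add: \<tau>_def)
      from S[OF this, of "of_real x"]
      have H: "((\<lambda>(n, r). e n r * ex N n \<tau> * ex N r (of_real x)) has_sum 0) (Sigma UNIV (\<lambda>_. UNIV))"
        by simp
      have "((\<lambda>n. infsum (\<lambda>r. e n r * ex N n \<tau> * ex N r (of_real x)) UNIV) has_sum 0) UNIV"
      proof (rule has_sum_SigmaD[OF H])
        fix n :: int
        have "(\<lambda>r. ex N n \<tau> * (e n r * ex N r (of_real x))) summable_on UNIV"
          by (rule summable_on_cmult_right[OF sumr])
        then show "((\<lambda>r. case (n, r) of (n, r) \<Rightarrow> e n r * ex N n \<tau> * ex N r (of_real x)) has_sum
            infsum (\<lambda>r. e n r * ex N n \<tau> * ex N r (of_real x)) UNIV) UNIV"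
          by (simp add: mult_ac)
      qed
      moreover have "infsum (\<lambda>r. e n r * ex N n \<tau> * ex N r (of_real x)) UNIV
          = (B n (of_real x) * ex N n \<i>) * ex N n (of_real y)" for n
      proof -
        have "infsum (\<lambda>r. e n r * ex N n \<tau> * ex N r (of_real x)) UNIV
            = infsum (\<lambda>r. ex N n \<tau> * (e n r * ex N r (of_real x))) UNIV"
          by (simp add: mult_ac)
        also have "\<dots> = ex N n \<tau> * B n (of_real x)"
          by (simp add: infsum_cmult_right' B_def)
        finally show ?thesis by (simp add: \<tau>_def ex_add_arg mult_ac)
      qed
      ultimately show ?thesis by simp
    qed
    from fourier_unique_1d[OF N this, of n] show ?thesis by simp
  qed
  have "((\<lambda>r. e n0 r * ex N r (of_real x)) has_sum 0) UNIV" for x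
    using has_sum_infsum[OF sumr[of n0 "of_real x"]] B0[of n0 x] by (simp add: B_def)
  from fourier_unique_1d[OF N this] show ?thesis .
qed



definition Mlam :: "int \<Rightarrow> imat" where
  "Mlam l i j = (if i = j then 1 else if i = 2 \<and> j = 1 then l else if i = 3 \<and> j = 4 then -l else 0)"

lemma four: "{1..4::nat} = {1,2,3,4}" by auto

lemma Sp2Z_Mlam: "Sp2Z (Mlam l)"
  unfolding Sp2Z_def four by (simp add: Mlam_def Jsym_def)

lemma P21Z_Mlam: "P21Z (Mlam l)"
  unfolding P21Z_def by (simp add: Sp2Z_Mlam) (simp add: Mlam_def)

lemma Gamma2_Mlam: "int N dvd l \<Longrightarrow> Gamma2 N (Mlam l)"
  unfolding Gamma2_def four by (simp add: Sp2Z_Mlam) (simp add: Mlam_def)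

lemma j_fac_Mlam: "j_fac (Mlam l) W = 1"
  by (simp add: j_fac_def det2_def madd2_def mmul2_def blk_def Mlam_def)

lemma sp_act_Mlam:
  "sp_act (Mlam l) (Om \<tau> z \<omega>) 1 1 = \<tau>"
  "sp_act (Mlam l) (Om \<tau> z \<omega>) 1 2 = z + of_int l * \<tau>"
  "sp_act (Mlam l) (Om \<tau> z \<omega>) 2 2 = \<omega> + of_int l ^ 2 * \<tau> + 2 * of_int l * z"
  by (simp_all add: sp_act_def minv2_def det2_def madd2_def mmul2_def blk_def Mlam_def Om_def algebra_simps power2_eq_square)

lemma slashed_Mlam:
  "slashed k m \<phi> (Mlam l) (Om \<tau> z \<omega>) = \<phi> \<tau> (z + of_int l * \<tau>) * exp (2 * pi * \<i> * of_rat m * (\<omega> + of_int l ^ 2 * \<tau> + 2 * of_int l * z))"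
  unfolding slashed_def ephi_def j_fac_Mlam sp_act_Mlam by simp

lemma ephi_Om: "ephi m \<phi> (Om \<tau> z \<omega>) = \<phi> \<tau> z * exp (2 * pi * \<i> * of_rat m * \<omega>)"
  by (simp add: ephi_def Om_def)

lemma jac_shift:
  assumes wj: "weakly_hol_jacobi N k m chi \<phi>" and l: "int N dvd l" and t: "Im \<tau> > 0"
  shows "\<phi> \<tau> (z + of_int l * \<tau>) * exp (2 * pi * \<i> * of_rat m * (of_int l ^ 2 * \<tau> + 2 * of_int l * z))
         = chi (Mlam l) * \<phi> \<tau> z"
proof -
  define \<omega> where "\<omega> = \<i> * of_real ((Im z)^2 / Im \<tau> + 1)"
  have "H2 \<tau> z \<omega>"
    using t by (simp add: H2_def \<omega>_def field_simps)
  with wj P21Z_Mlam Gamma2_Mlam[OF l]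
  have "slashed k m \<phi> (Mlam l) (Om \<tau> z \<omega>) = chi (Mlam l) * ephi m \<phi> (Om \<tau> z \<omega>)"
    unfolding weakly_hol_jacobi_def by blast
  hence "\<phi> \<tau> (z + of_int l * \<tau>) * exp (2 * pi * \<i> * of_rat m * (of_int l ^ 2 * \<tau> + 2 * of_int l * z)) * exp (2 * pi * \<i> * of_rat m * \<omega>)
      = chi (Mlam l) * \<phi> \<tau> z * exp (2 * pi * \<i> * of_rat m * \<omega>)"
    unfolding slashed_Mlam ephi_Om by (simp add: exp_add[symmetric] algebra_simps)
  then show ?thesis by simp
qed

lemma chi_nonzero:
  assumes wj: "weakly_hol_jacobi N k m chi \<phi>" and l: "int N dvd l"
  shows "chi (Mlam l) \<noteq> 0"
proof -
  from wj obtain d :: nat where d: "d > 0" "\<forall>M. P21Z M \<and> Gamma2 N M \<longrightarrow> chi M ^ d = 1"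
    unfolding weakly_hol_jacobi_def by blast
  then have "chi (Mlam l) ^ d = 1" using P21Z_Mlam Gamma2_Mlam[OF l] by blast
  then show ?thesis using d(1) by (cases d) auto
qed



lemma has_fexp_ex: "has_fexp N \<psi> c \<longleftrightarrow> (\<forall>\<tau> z. Im \<tau> > 0 \<longrightarrow>
     ((\<lambda>(n, r). c n r * ex N n \<tau> * ex N r z) has_sum \<psi> \<tau> z) UNIV)"
  by (simp add: has_fexp_def ex_def)

lemma fexp_unique:
  assumes N: "N > 0" and c: "has_fexp N \<psi> c" and d: "has_fexp N \<psi> d"
  shows "c = d"
proof (intro ext)
  fix n0 r0
  have "c n0 r0 - d n0 r0 = 0"
  proof (rule fourier_unique_2d[OF N])
    fix \<tau> z :: complex assume t: "Im \<tau> > 0"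
    have "((\<lambda>x. (\<lambda>(n, r). c n r * ex N n \<tau> * ex N r z) x + - (\<lambda>(n, r). d n r * ex N n \<tau> * ex N r z) x) has_sum (\<psi> \<tau> z + - \<psi> \<tau> z)) UNIV"
      by (intro has_sum_add has_sum_uminusI) (use c d t in \<open>auto simp: has_fexp_ex\<close>)
    then show "((\<lambda>(n, r). (c n r - d n r) * ex N n \<tau> * ex N r z) has_sum 0) UNIV"
      by (simp add: case_prod_unfold algebra_simps)
  qed
  then show "c n0 r0 = d n0 r0" by simp
qed

lemma coef_rel:
  assumes N: "N > 0" and wj: "weakly_hol_jacobi N k m chi \<phi>" and c: "has_fexp N \<phi> c"
    and l: "int N dvd l"
    and ht: "of_rat m * of_int l ^ 2 = (of_int t / of_nat N :: complex)"
    and hs: "of_rat m * 2 * of_int l = (of_int s / of_nat N :: complex)"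
  shows "c n r = chi (Mlam l) * c (n + r * l + t) (r + s)"
proof -
  define g where "g = (\<lambda>(n::int, r::int). (n + r * l + t, r + s))"
  define gi where "gi = (\<lambda>(n::int, r::int). (n - (r - s) * l - t, r - s))"
  have gig: "gi (g x) = x" for x by (auto simp: g_def gi_def algebra_simps split: prod.splits)
  have ggi: "g (gi x) = x" for x by (auto simp: g_def gi_def algebra_simps split: prod.splits)
  have bij: "bij_betw g UNIV UNIV"
    by (rule bij_betwI[of _ _ _ gi]) (auto simp: gig ggi)
  define c1 where "c1 n r = c (fst (gi (n, r))) (snd (gi (n, r)))" for n r
  define c2 where "c2 n r = chi (Mlam l) * c n r" for n r
  have E: "exp (2 * pi * \<i> * of_rat m * (of_int l ^ 2 * \<tau> + 2 * of_int l * z)) = ex N t \<tau> * ex N s z" for \<tau> z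
  proof -
    have "2 * pi * \<i> * of_rat m * (of_int l ^ 2 * \<tau> + 2 * of_int l * z)
        = 2 * pi * \<i> * (of_rat m * of_int l ^ 2) * \<tau> + 2 * pi * \<i> * (of_rat m * 2 * of_int l) * z"
      by (simp add: algebra_simps)
    also have "\<dots> = 2 * pi * \<i> * (of_int t / of_nat N) * \<tau> + 2 * pi * \<i> * (of_int s / of_nat N) * z"
      by (simp only: ht hs)
    finally show ?thesis by (simp only: ex_def exp_add)
  qed
  have exsh: "ex N r (z + of_int l * \<tau>) = ex N r z * ex N (r * l) \<tau>" for r z \<tau>
    by (simp add: ex_def exp_add[symmetric] algebra_simps add_divide_distrib)
  have h1: "has_fexp N (\<lambda>\<tau> z. chi (Mlam l) * \<phi> \<tau> z) c1"
    unfolding has_fexp_ex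
  proof (intro allI impI)
    fix \<tau> z :: complex assume t: "Im \<tau> > 0"
    from c t have "((\<lambda>(n, r). c n r * ex N n \<tau> * ex N r (z + of_int l * \<tau>)) has_sum \<phi> \<tau> (z + of_int l * \<tau>)) UNIV"
      by (simp add: has_fexp_ex)
    from has_sum_cmult_left[OF this, of "ex N t \<tau> * ex N s z"]
    have A: "((\<lambda>x. (case x of (n, r) \<Rightarrow> c n r * ex N n \<tau> * ex N r (z + of_int l * \<tau>)) * (ex N t \<tau> * ex N s z))
              has_sum \<phi> \<tau> (z + of_int l * \<tau>) * (ex N t \<tau> * ex N s z)) UNIV" .
    have J: "\<phi> \<tau> (z + of_int l * \<tau>) * (ex N t \<tau> * ex N s z) = chi (Mlam l) * \<phi> \<tau> z"
      using jac_shift[OF wj l t, of z] unfolding E .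
    have pt: "(case x of (n, r) \<Rightarrow> c n r * ex N n \<tau> * ex N r (z + of_int l * \<tau>)) * (ex N t \<tau> * ex N s z)
        = c1 (fst (g x)) (snd (g x)) * ex N (fst (g x)) \<tau> * ex N (snd (g x)) z" for x
    proof (cases x)
      case (Pair n r)
      have "ex N n \<tau> * ex N (r * l) \<tau> * ex N t \<tau> = ex N (n + r * l + t) \<tau>"
        by (simp add: ex_mult)
      moreover have "ex N r z * ex N s z = ex N (r + s) z" by (simp add: ex_mult)
      moreover have "c1 (fst (g x)) (snd (g x)) = c n r"
        using gig[of x] Pair by (simp add: c1_def)
      ultimately show ?thesis using Pair
        by (simp add: g_def exsh) (metis (no_types, lifting) mult.assoc mult.commute)
    qed
    have "((\<lambda>x. c1 (fst (g x)) (snd (g x)) * ex N (fst (g x)) \<tau> * ex N (snd (g x)) z) has_sum (chi (Mlam l) * \<phi> \<tau> z)) UNIV"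
      using A unfolding J pt .
    then show "((\<lambda>(n, r). c1 n r * ex N n \<tau> * ex N r z) has_sum chi (Mlam l) * \<phi> \<tau> z) UNIV"
      using has_sum_reindex_bij_betw[OF bij, of "\<lambda>(n, r). c1 n r * ex N n \<tau> * ex N r z"]
      by (simp add: case_prod_unfold)
  qed
  have h2: "has_fexp N (\<lambda>\<tau> z. chi (Mlam l) * \<phi> \<tau> z) c2"
    unfolding has_fexp_ex
  proof (intro allI impI)
    fix \<tau> z :: complex assume t: "Im \<tau> > 0"
    from c t have "((\<lambda>(n, r). c n r * ex N n \<tau> * ex N r z) has_sum \<phi> \<tau> z) UNIV"
      by (simp add: has_fexp_ex)
    from has_sum_cmult_right[OF this, of "chi (Mlam l)"]
    show "((\<lambda>(n, r). c2 n r * ex N n \<tau> * ex N r z) has_sum chi (Mlam l) * \<phi> \<tau> z) UNIV"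
      by (simp add: c2_def case_prod_unfold mult_ac)
  qed
  from fexp_unique[OF N h1 h2] have "c1 = c2" .
  then have "c1 (n + r * l + t) (r + s) = c2 (n + r * l + t) (r + s)" by simp
  then show ?thesis by (simp add: c1_def c2_def gi_def)
qed



lemma region_jac:
  fixes c :: "int \<Rightarrow> int \<Rightarrow> complex" and p q N l s t B :: int
  assumes rel: "\<And>n r. c n r \<noteq> 0 \<longleftrightarrow> c (n + r * l + t) (r + s) \<noteq> 0"
    and Bd: "\<And>n r. c n r \<noteq> 0 \<Longrightarrow> B \<le> n"
    and ld: "l = N * q" and sd: "s = 2 * p * N^2" and td: "t = p * q * N^3"
    and N: "N > 0" and q: "q > 0" and p: "p \<ge> 0"
  shows "\<exists>a b cc :: real. a > 0 \<and> (\<forall>n r. c n r \<noteq> 0 \<longrightarrow>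
           real_of_int n / real_of_int N \<ge> a * (real_of_int r / real_of_int N)^2 + b * (real_of_int r / real_of_int N) + cc)"
proof (cases "p = 0")
  case True
  hence s0: "s = 0" and t0: "t = 0" by (simp_all add: sd td)
  have up: "c (n + int k * (r * l)) r \<noteq> 0" if "c n r \<noteq> 0" for k n r
  proof (induction k)
    case 0 then show ?case using that by simp
  next
    case (Suc k)
    then show ?case using rel[of "n + int k * (r * l)" r] s0 t0 by (simp add: algebra_simps)
  qed
  have down: "c (n - int k * (r * l)) r \<noteq> 0" if "c n r \<noteq> 0" for k n r
  proof (induction k)
    case 0 then show ?case using that by simp
  next
    case (Suc k)
    then show ?case using rel[of "n - int (Suc k) * (r * l)" r] s0 t0 by (simp add: algebra_simps)
  qed
  have r0: "r = 0" if "c n r \<noteq> 0" for n r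
  proof (rule ccontr)
    assume "r \<noteq> 0"
    hence rl: "r * l \<noteq> 0" using ld N q by simp
    define k where "k = nat (\<bar>n\<bar> + \<bar>B\<bar> + 1)"
    show False
    proof (cases "r * l > 0")
      case True
      have "int k * (r * l) \<ge> int k" using True by (simp add: mult_le_cancel_left1 ) 
      moreover have "int k = \<bar>n\<bar> + \<bar>B\<bar> + 1" by (simp add: k_def)
      ultimately have "n - int k * (r * l) < B" using abs_ge_self[of n] abs_ge_minus_self[of B] by linarith
      with Bd[OF down[OF that, of k]] show False by simp
    next
      case False
      with rl have "r * l < 0" by linarith
      have "int k * 1 \<le> int k * (- (r * l))" using \<open>r * l < 0\<close> by (intro mult_left_mono) auto
      hence "int k * (- (r * l)) \<ge> int k" by simp
      moreover have "int k = \<bar>n\<bar> + \<bar>B\<bar> + 1" by (simp add: k_def)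
      ultimately have "n + int k * (r * l) < B" using abs_ge_self[of n] abs_ge_minus_self[of B] by (simp add: algebra_simps)
      with Bd[OF up[OF that, of k]] show False by simp
    qed
  qed
  show ?thesis
  proof (rule exI[of _ 1], rule exI[of _ 0], rule exI[of _ "real_of_int B / real_of_int N"], intro conjI allI impI)
    fix n r assume "c n r \<noteq> 0"
    with r0 Bd have "r = 0" "B \<le> n" by auto
    then show "real_of_int n / real_of_int N \<ge> 1 * (real_of_int r / real_of_int N)^2 + 0 * (real_of_int r / real_of_int N) + real_of_int B / real_of_int N"
      using N by (simp add: divide_right_mono)
  qed simp
next
  case False
  hence p: "p > 0" using p by simp
  hence s: "s > 0" using sd N by simp
  define Q where "Q n r = 4 * p * N * n - q * r^2" for n r
  have Qinv: "Q (n + r * l + t) (r + s) = Q n r" for n r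
    by (simp add: Q_def ld sd td power2_eq_square power3_eq_cube algebra_simps)
  have up: "\<exists>n'. c n' (r + int k * s) \<noteq> 0 \<and> Q n' (r + int k * s) = Q n r" if "c n r \<noteq> 0" for k n r
  proof (induction k)
    case 0 then show ?case using that by auto
  next
    case (Suc k)
    then obtain n' where "c n' (r + int k * s) \<noteq> 0" "Q n' (r + int k * s) = Q n r" by blast
    then show ?case using rel[of n' "r + int k * s"] Qinv[of n' "r + int k * s"]
      by (intro exI[of _ "n' + (r + int k * s) * l + t"]) (simp add: algebra_simps)
  qed
  have down: "\<exists>n'. c n' (r - int k * s) \<noteq> 0 \<and> Q n' (r - int k * s) = Q n r" if "c n r \<noteq> 0" for k n r
  proof (induction k)
    case 0 then show ?case using that by auto
  next
    case (Suc k)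
    then obtain n' where h: "c n' (r - int k * s) \<noteq> 0" "Q n' (r - int k * s) = Q n r" by blast
    define n2 where "n2 = n' - (r - int k * s - s) * l - t"
    have "c n2 (r - int (Suc k) * s) \<noteq> 0"
      using rel[of n2 "r - int (Suc k) * s"] h(1) by (simp add: n2_def algebra_simps)
    moreover have "Q n2 (r - int (Suc k) * s) = Q n r"
      using Qinv[of n2 "r - int (Suc k) * s"] h(2) by (simp add: n2_def algebra_simps)
    ultimately show ?case by blast
  qed
  define K where "K = 4 * p * N * B - q * s^2"
  have key: "4 * p * N * n \<ge> q * r^2 + K" if "c n r \<noteq> 0" for n r
  proof -
    have "\<exists>n'. c n' (r mod s) \<noteq> 0 \<and> Q n' (r mod s) = Q n r"
    proof (cases "r div s \<ge> 0")
      case True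
      have "r mod s = r - int (nat (r div s)) * s" using True by (simp add: minus_div_mult_eq_mod[symmetric] mult.commute)
      then show ?thesis using down[OF that, of "nat (r div s)"] by simp
    next
      case False
      have "r mod s = r + int (nat (- (r div s))) * s" using False by (simp add: minus_div_mult_eq_mod[symmetric] mult.commute)
      then show ?thesis using up[OF that, of "nat (- (r div s))"] by simp
    qed
    then obtain n' where h: "c n' (r mod s) \<noteq> 0" "Q n' (r mod s) = Q n r" by blast
    have "B \<le> n'" using Bd[OF h(1)] .
    have m0: "0 \<le> r mod s" "r mod s < s" using s by auto
    have "(r mod s)^2 \<le> s^2" using m0 by (intro power_mono) auto
    hence "q * (r mod s)^2 \<le> q * s^2" using q by simp
    moreover have "4 * p * N * B \<le> 4 * p * N * n'" using \<open>B \<le> n'\<close> p N by simp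
    ultimately have "Q n' (r mod s) \<ge> K" unfolding Q_def K_def by linarith
    then show ?thesis using h(2) unfolding Q_def by linarith
  qed
  show ?thesis
  proof (rule exI[of _ "real_of_int q / (4 * real_of_int p)"], rule exI[of _ 0], rule exI[of _ "real_of_int K / (4 * real_of_int p * real_of_int N ^ 2)"], intro conjI allI impI)
    show "real_of_int q / (4 * real_of_int p) > 0" using p q by simp
    fix n r assume "c n r \<noteq> 0"
    from key[OF this] have "real_of_int (4 * p * N * n) \<ge> real_of_int (q * r^2 + K)" by linarith
    hence k2: "4 * real_of_int p * real_of_int N * real_of_int n \<ge> real_of_int q * (real_of_int r)^2 + real_of_int K" by simp
    have pos: "4 * real_of_int p * real_of_int N ^ 2 > 0" using p N by simp
    have "real_of_int q / (4 * real_of_int p) * (real_of_int r / real_of_int N)\<^sup>2 + 0 * (real_of_int r / real_of_int N) + real_of_int K / (4 * real_of_int p * real_of_int N ^ 2)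
        = (real_of_int q * (real_of_int r)^2 + real_of_int K) / (4 * real_of_int p * real_of_int N ^ 2)"
      using p N by (simp add: field_simps power2_eq_square)
    also have "\<dots> \<le> (4 * real_of_int p * real_of_int N * real_of_int n) / (4 * real_of_int p * real_of_int N ^ 2)"
      by (rule divide_right_mono[OF k2]) (use pos in simp)
    also have "\<dots> = real_of_int n / real_of_int N" using p N by (simp add: field_simps power2_eq_square)
    finally show "real_of_int q / (4 * real_of_int p) * (real_of_int r / real_of_int N)\<^sup>2 + 0 * (real_of_int r / real_of_int N) + real_of_int K / (4 * real_of_int p * real_of_int N ^ 2) \<le> real_of_int n / real_of_int N" .
  qed
qed



lemma quad_lower:
  fixes a b x :: real assumes a: "a > 0"
  shows "a * x^2 + b * x \<ge> - (b^2 / (4 * a))"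
proof -
  have "0 \<le> a * (x + b / (2 * a))^2" using a by simp
  also have "a * (x + b / (2 * a))^2 = a * x^2 + b * x + b^2 / (4 * a)"
    using a by (simp add: field_simps power2_eq_square)
  finally show ?thesis by simp
qed

lemma quad_upper:
  fixes a b C x :: real assumes a: "a > 0" and h: "a * x^2 + b * x \<le> C"
  shows "\<bar>x\<bar> < (\<bar>b\<bar> + \<bar>C\<bar> + 1) / a + 1"
proof (rule ccontr)
  define M where "M = (\<bar>b\<bar> + \<bar>C\<bar> + 1) / a + 1"
  assume "\<not> \<bar>x\<bar> < (\<bar>b\<bar> + \<bar>C\<bar> + 1) / a + 1"
  hence xM: "\<bar>x\<bar> \<ge> M" by (simp add: M_def)
  have "(\<bar>b\<bar> + \<bar>C\<bar> + 1) / a \<ge> 0" using a by simp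
  hence M1: "M \<ge> 1" by (simp add: M_def)
  have "a * \<bar>x\<bar> \<ge> a * M" using xM a by (simp add: mult_left_mono)
  moreover have "a * ((\<bar>b\<bar> + \<bar>C\<bar> + 1) / a) = \<bar>b\<bar> + \<bar>C\<bar> + 1" using a by simp
  hence "a * M = \<bar>b\<bar> + \<bar>C\<bar> + 1 + a" unfolding M_def by (simp add: distrib_left)
  ultimately have ax: "a * \<bar>x\<bar> - \<bar>b\<bar> \<ge> \<bar>C\<bar> + 1" using a by linarith
  have x0: "\<bar>x\<bar> \<ge> 0" by simp
  have "\<bar>x\<bar> * (\<bar>C\<bar> + 1) \<le> \<bar>x\<bar> * (a * \<bar>x\<bar> - \<bar>b\<bar>)"
    using mult_left_mono[OF ax x0] .
  moreover have "\<bar>x\<bar> * (a * \<bar>x\<bar> - \<bar>b\<bar>) \<le> a * x^2 + b * x"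
  proof -
    have "\<bar>b * x\<bar> = \<bar>x\<bar> * \<bar>b\<bar>" by (simp add: abs_mult)
    hence "- (\<bar>x\<bar> * \<bar>b\<bar>) \<le> b * x" using abs_ge_minus_self[of "b * x"] by linarith
    moreover have "\<bar>x\<bar> * (a * \<bar>x\<bar>) = a * x^2"
      by (simp only: power2_eq_square abs_mult_self_eq mult.left_commute)
    moreover have "\<bar>x\<bar> * (a * \<bar>x\<bar> - \<bar>b\<bar>) = \<bar>x\<bar> * (a * \<bar>x\<bar>) - \<bar>x\<bar> * \<bar>b\<bar>"
      by (simp only: right_diff_distrib)
    ultimately show ?thesis by linarith
  qed
  ultimately have A: "\<bar>x\<bar> * (\<bar>C\<bar> + 1) \<le> a * x^2 + b * x" by (rule order_trans)
  have "1 * (\<bar>C\<bar> + 1) \<le> \<bar>x\<bar> * (\<bar>C\<bar> + 1)"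
    using xM M1 by (intro mult_right_mono) auto
  hence "\<bar>C\<bar> + 1 \<le> a * x^2 + b * x" using A by simp
  then show False using h abs_ge_self[of C] by linarith
qed

lemma inRJ_of_region:
  fixes f :: fser and N :: nat
  assumes N: "N > 0"
    and reg: "\<exists>a b cc :: real. a > 0 \<and> (\<forall>n r. f n r \<noteq> 0 \<longrightarrow>
           real_of_int n / real N \<ge> a * (real_of_int r / real N)^2 + b * (real_of_int r / real N) + cc)"
  shows "inRJ N f"
proof -
  obtain a b cc :: real where a: "a > 0" and R: "\<And>n r. f n r \<noteq> 0 \<Longrightarrow>
           real_of_int n / real N \<ge> a * (real_of_int r / real N)^2 + b * (real_of_int r / real N) + cc"
    using reg by blast
  have fin: "finite {r. f n r \<noteq> 0}" for n
  proof -
    define C where "C = real_of_int n / real N - cc"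
    define M where "M = (\<bar>b\<bar> + \<bar>C\<bar> + 1) / a + 1"
    have "{r. f n r \<noteq> 0} \<subseteq> {- \<lceil>M * real N\<rceil> .. \<lceil>M * real N\<rceil>}"
    proof
      fix r assume "r \<in> {r. f n r \<noteq> 0}"
      hence "a * (real_of_int r / real N)^2 + b * (real_of_int r / real N) \<le> C"
        using R[of n r] by (simp add: C_def)
      from quad_upper[OF a this] have "\<bar>real_of_int r / real N\<bar> < M" by (simp add: M_def)
      hence "\<bar>real_of_int r\<bar> < M * real N" using N by (simp add: field_simps abs_div)
      hence "\<bar>real_of_int r\<bar> \<le> real_of_int \<lceil>M * real N\<rceil>" by linarith
      hence "\<bar>r\<bar> \<le> \<lceil>M * real N\<rceil>" by (metis of_int_abs of_int_le_iff)
      then show "r \<in> {- \<lceil>M * real N\<rceil> .. \<lceil>M * real N\<rceil>}" by (simp add: abs_le_iff)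
    qed
    then show ?thesis by (rule finite_subset) simp
  qed
  have bdd: "bdd_below {n. \<exists>r. f n r \<noteq> 0}"
  proof (rule bdd_belowI)
    fix n assume "n \<in> {n. \<exists>r. f n r \<noteq> 0}"
    then obtain r where "f n r \<noteq> 0" by auto
    from R[OF this] quad_lower[OF a, of b "real_of_int r / real N"]
    have "real_of_int n / real N \<ge> cc - b^2 / (4 * a)" by linarith
    hence "real_of_int n \<ge> (cc - b^2 / (4 * a)) * real N" using N by (simp add: field_simps)
    then show "\<lfloor>(cc - b^2 / (4 * a)) * real N\<rfloor> \<le> n" by linarith
  qed
  show ?thesis
    unfolding inRJ_def inR_def fsupp_def
  proof (intro conjI allI)
    show "\<exists>a b c. 0 < a \<and> (\<forall>(n, r)\<in>{(n, r). f n r \<noteq> 0}.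
        a * (real_of_int r / real N)\<^sup>2 + b * (real_of_int r / real N) + c \<le> real_of_int n / real N)"
      using a R by blast
  qed (use fin bdd in auto)
qed



lemma fs_mult_finite:
  assumes "finite (fsupp f)"
  shows "fs_mult f g n r = (\<Sum>(n1, r1)\<in>fsupp f. f n1 r1 * g (n - n1) (r - r1))"
proof -
  have "fs_mult f g n r = infsum (\<lambda>(n1, r1). f n1 r1 * g (n - n1) (r - r1)) (fsupp f)"
    unfolding fs_mult_def by (rule infsum_cong_neutral) (auto simp: fsupp_def)
  then show ?thesis using assms by simp
qed

lemma fsupp_mult:
  assumes "finite (fsupp f)" and "(n, r) \<in> fsupp (fs_mult f g)"
  shows "\<exists>n1 r1 n2 r2. (n1, r1) \<in> fsupp f \<and> (n2, r2) \<in> fsupp g \<and> n = n1 + n2 \<and> r = r1 + r2"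
proof (rule ccontr)
  assume H: "\<not> ?thesis"
  have "fs_mult f g n r = (\<Sum>(n1, r1)\<in>fsupp f. f n1 r1 * g (n - n1) (r - r1))"
    by (rule fs_mult_finite[OF assms(1)])
  also have "\<dots> = 0"
  proof (rule sum.neutral, safe)
    fix n1 r1 assume "(n1, r1) \<in> fsupp f"
    with H have "(n - n1, r - r1) \<notin> fsupp g" by force
    then show "f n1 r1 * g (n - n1) (r - r1) = 0" by (simp add: fsupp_def)
  qed
  finally show False using assms(2) by (simp add: fsupp_def)
qed

lemma fsupp_mult_finite:
  assumes "finite (fsupp f)" "finite (fsupp g)"
  shows "finite (fsupp (fs_mult f g))"
proof -
  have "fsupp (fs_mult f g) \<subseteq> (\<lambda>((n1, r1), (n2, r2)). (n1 + n2, r1 + r2)) ` (fsupp f \<times> fsupp g)"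
  proof
    fix x assume "x \<in> fsupp (fs_mult f g)"
    then obtain n r where x: "x = (n, r)" "(n, r) \<in> fsupp (fs_mult f g)" by (cases x) auto
    from fsupp_mult[OF assms(1) x(2)] obtain n1 r1 n2 r2 where
      "(n1, r1) \<in> fsupp f" "(n2, r2) \<in> fsupp g" "n = n1 + n2" "r = r1 + r2" by blast
    then show "x \<in> (\<lambda>((n1, r1), (n2, r2)). (n1 + n2, r1 + r2)) ` (fsupp f \<times> fsupp g)"
      using x(1) by (auto intro!: image_eqI[of _ _ "((n1, r1), (n2, r2))"])
  qed
  then show ?thesis by (rule finite_subset) (use assms in auto)
qed

lemma fsupp_one: "fsupp fs_one = {(0, 0)}"
  by (auto simp: fsupp_def fs_one_def)

lemma fsupp_factor:
  "fsupp (prod_factor h j) \<subseteq> {(0, 0)} \<union> (\<lambda>(a, r). (a + int j, r)) ` {(a, r). h j a r \<noteq> 0}"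
proof
  fix x assume "x \<in> fsupp (prod_factor h j)"
  then obtain n r where x: "x = (n, r)" "fs_one n r + h j (n - int j) r \<noteq> 0"
    by (cases x) (auto simp: fsupp_def prod_factor_def)
  show "x \<in> {(0, 0)} \<union> (\<lambda>(a, r). (a + int j, r)) ` {(a, r). h j a r \<noteq> 0}"
  proof (cases "h j (n - int j) r = 0")
    case True
    with x show ?thesis by (auto simp: fs_one_def split: if_splits)
  next
    case False
    with x show ?thesis by (auto intro!: image_eqI[of _ _ "(n - int j, r)"])
  qed
qed

context
  fixes h :: "nat \<Rightarrow> int \<Rightarrow> int \<Rightarrow> complex" and D :: real
  assumes fin: "\<And>j. finite {(a, r). h j a r \<noteq> 0}"
    and nonneg: "\<And>j a r. h j a r \<noteq> 0 \<Longrightarrow> a \<ge> 0"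
    and Dpos: "D > 0"
    and Dbd: "\<And>j a r. j \<ge> 1 \<Longrightarrow> h j a r \<noteq> 0 \<Longrightarrow> real_of_int \<bar>r\<bar> \<le> D"
begin

lemma finite_factor: "finite (fsupp (prod_factor h j))"
  by (rule finite_subset[OF fsupp_factor]) (use fin in auto)

lemma finite_pp: "finite (fsupp (partial_prod h J))"
  by (induction J) (auto simp: fsupp_one intro!: fsupp_mult_finite finite_factor)

lemma inv_pp: "(n, r) \<in> fsupp (partial_prod h J) \<Longrightarrow>
   \<exists>k::nat. k \<le> J \<and> 2 * n \<ge> int k * (int k + 1) \<and> real_of_int \<bar>r\<bar> \<le> D * real k"
proof (induction J arbitrary: n r)
  case 0
  then show ?case by (auto simp: fsupp_one)
next
  case (Suc J)
  from fsupp_mult[OF finite_pp Suc.prems[simplified]] obtain n1 r1 n2 r2 where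
    h1: "(n1, r1) \<in> fsupp (partial_prod h J)" and h2: "(n2, r2) \<in> fsupp (prod_factor h (Suc J))"
    and nr: "n = n1 + n2" "r = r1 + r2" by blast
  from Suc.IH[OF h1] obtain k where k: "k \<le> J" "2 * n1 \<ge> int k * (int k + 1)" "real_of_int \<bar>r1\<bar> \<le> D * real k"
    by blast
  from h2 have "(n2, r2) = (0, 0) \<or> h (Suc J) (n2 - int (Suc J)) r2 \<noteq> 0"
    by (auto simp: fsupp_def prod_factor_def fs_one_def split: if_splits)
  then show ?case
  proof
    assume "(n2, r2) = (0, 0)"
    then show ?case using k nr by (intro exI[of _ k]) auto
  next
    assume hz: "h (Suc J) (n2 - int (Suc J)) r2 \<noteq> 0"
    from nonneg[OF hz] have n2: "n2 \<ge> int J + 1" by simp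
    from Dbd[OF _ hz] have r2: "real_of_int \<bar>r2\<bar> \<le> D" by simp
    show ?case
    proof (intro exI[of _ "Suc k"] conjI)
      show "Suc k \<le> Suc J" using k by simp
      have "int k \<le> int J" using k by simp
      then show "2 * n \<ge> int (Suc k) * (int (Suc k) + 1)"
        using k(2) n2 nr by (simp add: algebra_simps)
      have "real_of_int \<bar>r\<bar> \<le> real_of_int \<bar>r1\<bar> + real_of_int \<bar>r2\<bar>"
        using nr by (simp add: abs_triangle_ineq flip: of_int_add)
      then show "real_of_int \<bar>r\<bar> \<le> D * real (Suc k)" using k(3) r2 by (simp add: algebra_simps)
    qed
  qed
qed

lemma pp_nonneg: "partial_prod h J n r \<noteq> 0 \<Longrightarrow> n \<ge> 0"
proof -
  assume "partial_prod h J n r \<noteq> 0"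
  then have "(n, r) \<in> fsupp (partial_prod h J)" by (simp add: fsupp_def)
  from inv_pp[OF this] obtain k :: nat where "2 * n \<ge> int k * (int k + 1)" by blast
  moreover have "int k * (int k + 1) \<ge> 0" by simp
  ultimately show "n \<ge> 0" by linarith
qed

lemma pp_stable:
  assumes "n \<le> int J"
  shows "partial_prod h (Suc J) n r = partial_prod h J n r"
proof -
  let ?P = "partial_prod h J"
  have "partial_prod h (Suc J) n r = (\<Sum>(n1, r1)\<in>fsupp ?P. ?P n1 r1 * prod_factor h (Suc J) (n - n1) (r - r1))"
    by (simp add: fs_mult_finite[OF finite_pp])
  also have "\<dots> = (\<Sum>x\<in>fsupp ?P. if x = (n, r) then ?P n r else 0)"
  proof (rule sum.cong[OF refl], safe)
    fix n1 r1 assume x: "(n1, r1) \<in> fsupp ?P"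
    hence "n1 \<ge> 0" using pp_nonneg by (auto simp: fsupp_def)
    hence "h (Suc J) (n - n1 - int (Suc J)) (r - r1) = 0" using nonneg assms
      by (metis diff_ge_0_iff_ge le_diff_eq linorder_not_less add.commute le_add_same_cancel2 of_nat_Suc
          order_less_le_trans not_le zless_add1_eq zle_add1_eq_le)
    then show "?P n1 r1 * prod_factor h (Suc J) (n - n1) (r - r1) = (if (n1, r1) = (n, r) then ?P n r else 0)"
      by (auto simp: prod_factor_def fs_one_def)
  qed
  also have "\<dots> = ?P n r"
    by (subst sum.delta[OF finite_pp]) (auto simp: fsupp_def)
  finally show ?thesis .
qed

lemma pp_eventually: "nat n \<le> J \<Longrightarrow> partial_prod h J n r = partial_prod h (nat n) n r"
proof (induction J rule: dec_induct)
  case base then show ?case by simp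
next
  case (step J)
  have "n \<le> int J" using step(1) by linarith
  then show ?case using pp_stable step(3) by simp
qed

lemma inf_prod_exists: "\<exists>f. is_inf_prod h f"
proof (intro exI[of _ "\<lambda>n r. partial_prod h (nat n) n r"])
  show "is_inf_prod h (\<lambda>n r. partial_prod h (nat n) n r)"
    unfolding is_inf_prod_def eventually_sequentially
    using pp_eventually by blast
qed

lemma inf_prod_RJ:
  assumes N: "N > 0" and f: "is_inf_prod h f"
  shows "inRJ N f"
proof (rule inRJ_of_region[OF N])
  show "\<exists>a b cc :: real. a > 0 \<and> (\<forall>n r. f n r \<noteq> 0 \<longrightarrow>
           real_of_int n / real N \<ge> a * (real_of_int r / real N)^2 + b * (real_of_int r / real N) + cc)"
  proof (rule exI[of _ "real N / (2 * D^2)"], rule exI[of _ 0], rule exI[of _ 0], intro conjI allI impI)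
    show "real N / (2 * D^2) > 0" using N Dpos by simp
    fix n r assume fnr: "f n r \<noteq> 0"
    from f have "\<forall>\<^sub>F J in sequentially. \<forall>r. partial_prod h J n r = f n r"
      unfolding is_inf_prod_def by blast
    then obtain J0 where "\<forall>J\<ge>J0. \<forall>r. partial_prod h J n r = f n r"
      unfolding eventually_sequentially by blast
    hence "partial_prod h J0 n r \<noteq> 0" using fnr by simp
    hence "(n, r) \<in> fsupp (partial_prod h J0)" by (simp add: fsupp_def)
    from inv_pp[OF this] obtain k :: nat where
      k: "2 * n \<ge> int k * (int k + 1)" "real_of_int \<bar>r\<bar> \<le> D * real k" by blast
    have "(real_of_int r)^2 = (real_of_int \<bar>r\<bar>)^2" by simp
    also have "\<dots> \<le> (D * real k)^2"
      by (rule power_mono[OF k(2)]) simp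
    also have "\<dots> = D^2 * (real k * real k)" by (simp add: power2_eq_square)
    also have "\<dots> \<le> D^2 * (real k * (real k + 1))"
      by (rule mult_left_mono) (auto simp: distrib_left)
    also have "real k * (real k + 1) \<le> 2 * real_of_int n"
    proof -
      have "real_of_int (int k * (int k + 1)) \<le> real_of_int (2 * n)" using k(1) by linarith
      then show ?thesis by simp
    qed
    hence "D^2 * (real k * (real k + 1)) \<le> D^2 * (2 * real_of_int n)"
      by (rule mult_left_mono) simp
    finally have rr: "(real_of_int r)^2 \<le> 2 * D^2 * real_of_int n" by simp
    have "real N / (2 * D\<^sup>2) * (real_of_int r / real N)\<^sup>2 = (real_of_int r)^2 / (2 * D^2 * real N)"
      using N Dpos by (simp add: field_simps power2_eq_square)
    also have "\<dots> \<le> (2 * D^2 * real_of_int n) / (2 * D^2 * real N)"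
      by (rule divide_right_mono[OF rr]) simp
    also have "\<dots> = real_of_int n / real N" using Dpos by simp
    finally show "real N / (2 * D\<^sup>2) * (real_of_int r / real N)\<^sup>2 + 0 * (real_of_int r / real N) + 0
        \<le> real_of_int n / real N" by simp
  qed
qed

end


lemma laurent_RJ:
  assumes N: "N > 0" and f: "laurent_poly f"
  shows "inRJ N f"
proof (rule inRJ_of_region[OF N])
  let ?S = "fsupp f"
  define cc where "cc = - (\<Sum>(n, r)\<in>?S. \<bar>real_of_int n / real N\<bar> + (real_of_int r / real N)^2)"
  have fin: "finite ?S" using f by (simp add: laurent_poly_def)
  show "\<exists>a b cc :: real. a > 0 \<and> (\<forall>n r. f n r \<noteq> 0 \<longrightarrow>
           real_of_int n / real N \<ge> a * (real_of_int r / real N)^2 + b * (real_of_int r / real N) + cc)"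
  proof (rule exI[of _ 1], rule exI[of _ 0], rule exI[of _ cc], intro conjI allI impI)
    fix n r assume "f n r \<noteq> 0"
    hence mem: "(n, r) \<in> ?S" by (simp add: fsupp_def)
    have "(\<lambda>(n, r). \<bar>real_of_int n / real N\<bar> + (real_of_int r / real N)^2) (n, r)
        \<le> (\<Sum>(n, r)\<in>?S. \<bar>real_of_int n / real N\<bar> + (real_of_int r / real N)^2)"
      by (rule member_le_sum[OF mem _ fin]) auto
    hence "\<bar>real_of_int n / real N\<bar> + (real_of_int r / real N)^2 \<le> - cc" by (simp add: cc_def)
    then show "1 * (real_of_int r / real N)^2 + 0 * (real_of_int r / real N) + cc \<le> real_of_int n / real N"
      using abs_ge_minus_self[of "real_of_int n / real N"] by linarith
  qed simp
qed

lemma jac_RJ: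
  assumes N: "N > 0" and wj: "weakly_hol_jacobi N k m chi \<phi>" and c: "has_fexp N \<phi> c"
  shows "inRJ N c"
proof -
  from wj obtain c0 where c0: "has_fexp N \<phi> c0" "bdd_below {n. \<exists>r. c0 n r \<noteq> 0}"
    unfolding weakly_hol_jacobi_def by blast
  have cc0: "c = c0" by (rule fexp_unique[OF N c c0(1)])
  obtain B where B: "\<And>x. x \<in> {n. \<exists>r. c n r \<noteq> 0} \<Longrightarrow> B \<le> x"
    using c0(2) cc0 unfolding bdd_below_def by blast
  have m0: "m \<ge> 0" using wj unfolding weakly_hol_jacobi_def by blast
  obtain p q where pq: "quotient_of m = (p, q)" by (cases "quotient_of m")
  have q: "q > 0" using quotient_of_denom_pos[OF pq] .
  have mpq: "m = of_int p / of_int q" using quotient_of_div[OF pq] .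
  have p: "p \<ge> 0"
  proof -
    have "(0::rat) \<le> of_int p / of_int q" using m0 mpq by simp
    with q show ?thesis by (simp add: zero_le_divide_iff)
  qed
  define l where "l = int N * q"
  define s where "s = 2 * p * int N ^ 2"
  define t where "t = p * q * int N ^ 3"
  have mc: "(of_rat m :: complex) = of_int p / of_int q"
    by (simp add: mpq of_rat_divide)
  have ht: "of_rat m * of_int l ^ 2 = (of_int t / of_nat N :: complex)"
    using q N by (simp add: mc l_def t_def field_simps power2_eq_square power3_eq_cube)
  have hs: "of_rat m * 2 * of_int l = (of_int s / of_nat N :: complex)"
    using q N by (simp add: mc l_def s_def field_simps power2_eq_square)
  have ldvd: "int N dvd l" by (simp add: l_def)
  have chi0: "chi (Mlam l) \<noteq> 0" by (rule chi_nonzero[OF wj ldvd])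
  have rel: "c n r \<noteq> 0 \<longleftrightarrow> c (n + r * l + t) (r + s) \<noteq> 0" for n r
    using coef_rel[OF N wj c ldvd ht hs, of n r] chi0 by auto
  have Bd: "c n r \<noteq> 0 \<Longrightarrow> B \<le> n" for n r using B by blast
  have "\<exists>a b cc :: real. a > 0 \<and> (\<forall>n r. c n r \<noteq> 0 \<longrightarrow>
           real_of_int n / real_of_int (int N) \<ge> a * (real_of_int r / real_of_int (int N))^2 + b * (real_of_int r / real_of_int (int N)) + cc)"
    by (rule region_jac[where N="int N" and c=c and l=l and s=s and t=t and p=p and q=q and B=B,
          OF rel Bd l_def s_def t_def]) (use N q p in auto)
  then show ?thesis by (intro inRJ_of_region[OF N]) simp
qed

theorem lemma4p6:
  fixes N :: nat
  assumes "N > 0"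
  shows "(\<forall>f. laurent_poly f \<longrightarrow> inRJ N f)
    \<and> (\<forall>k m chi \<phi> c. weakly_hol_jacobi N k m chi \<phi> \<and> has_fexp N \<phi> c \<longrightarrow> inRJ N c)
    \<and> (\<forall>(h :: nat \<Rightarrow> int \<Rightarrow> int \<Rightarrow> complex) (D :: real).
         (\<forall>j. finite {(a, r). h j a r \<noteq> 0} \<and> (\<forall>a r. h j a r \<noteq> 0 \<longrightarrow> a \<ge> 0)) \<and>
         D > 0 \<and> (\<forall>j \<ge> 1. \<forall>a r. h j a r \<noteq> 0 \<longrightarrow> real_of_int \<bar>r\<bar> \<le> D)
         \<longrightarrow> (\<exists>f. is_inf_prod h f) \<and> (\<forall>f. is_inf_prod h f \<longrightarrow> inRJ N f))"
proof (intro conjI allI impI)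
  fix f show "laurent_poly f \<Longrightarrow> inRJ N f" using laurent_RJ[OF assms] by blast
next
  fix k m chi \<phi> c
  assume "weakly_hol_jacobi N k m chi \<phi> \<and> has_fexp N \<phi> c"
  then show "inRJ N c" using jac_RJ[OF assms] by blast
next
  fix h :: "nat \<Rightarrow> int \<Rightarrow> int \<Rightarrow> complex" and D :: real
  assume H: "(\<forall>j. finite {(a, r). h j a r \<noteq> 0} \<and> (\<forall>a r. h j a r \<noteq> 0 \<longrightarrow> a \<ge> 0)) \<and>
         D > 0 \<and> (\<forall>j \<ge> 1. \<forall>a r. h j a r \<noteq> 0 \<longrightarrow> real_of_int \<bar>r\<bar> \<le> D)"
  have fin: "\<And>j. finite {(a, r). h j a r \<noteq> 0}" and nn: "\<And>j a r. h j a r \<noteq> 0 \<Longrightarrow> a \<ge> 0"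
    and Dp: "D > 0" and Db: "\<And>j a r. j \<ge> 1 \<Longrightarrow> h j a r \<noteq> 0 \<Longrightarrow> real_of_int \<bar>r\<bar> \<le> D"
    using H by blast+
  show "\<exists>f. is_inf_prod h f" by (rule inf_prod_exists[OF fin nn Dp Db])
  fix f assume "is_inf_prod h f"
  then show "inRJ N f" using inf_prod_RJ[of h D N f] fin nn Dp Db assms by blast
qed

end
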